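(* There exists an absolute constant $C_2<1$ such that the following holds. Let $p$ be a prime, let $n\geq 2$ with $p>2n$, and let $A=\{v_1,\dots,v_n\}$ be a set of $n$ distinct elements of $\mathbb{Z}_p$. Let $Y_1,Y_2,Y_3$ be independent random variables, each uniformly distributed on $A$, and set $Y=Y_1+Y_2+Y_3$ (sum in $\mathbb{Z}_p$). Then $$\max_{x\in \mathbb{Z}_p} \mathbb{P}[Y=x]\leq\frac{C_2}{n}.$$
   Context: $\mathbb{Z}_p$ denotes the cyclic group of integers modulo the prime $p$. *)

theory Defs
  imports "HOL-Probability.Probability"
begin

text \<open>Z_p is represented by the residues {0..<p} (naturals) with addition mod p.
  Distribution of Y = Y1 + Y2 + Y3 (mod p) for independent Y_i uniform on A.\<close>

definition sum3_dist :: "nat \<Rightarrow> nat set \<Rightarrow> nat pmf" where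
  "sum3_dist p A =
     map_pmf (\<lambda>((a, b), c). (a + b + c) mod p)
       (pair_pmf (pair_pmf (pmf_of_set A) (pmf_of_set A)) (pmf_of_set A))"

end

theory Submission
  imports Defs
begin


definition ssum :: "int \<Rightarrow> int set \<Rightarrow> int set \<Rightarrow> int set" where
  "ssum p X Y = (\<lambda>(a,b). (a + b) mod p) ` (X \<times> Y)"

locale modp =
  fixes p :: int
  assumes pr: "prime p"
begin

lemma p_gt1: "p > 1" using pr prime_gt_1_int by blast

lemma eq_of_dvd: "a \<in> {0..<p} \<Longrightarrow> b \<in> {0..<p} \<Longrightarrow> p dvd (a - b) \<Longrightarrow> a = b"
  using mod_eq_dvd_iff[of a p b] by simp

lemma tr_inj: "inj_on (\<lambda>a. (a + d) mod p) {0..<p}"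
proof (rule inj_onI)
  fix a b assume a: "a \<in> {0..<p}" and b: "b \<in> {0..<p}" and e: "(a + d) mod p = (b + d) mod p"
  then have "p dvd (a + d) - (b + d)" using mod_eq_dvd_iff by blast
  then show "a = b" using eq_of_dvd[OF a b] by simp
qed

lemma invariant_full:
  assumes X: "X \<subseteq> {0..<p}" and a0: "a0 \<in> X" and d: "\<not> p dvd d"
    and inv: "\<And>a. a \<in> X \<Longrightarrow> (a + d) mod p \<in> X"
  shows "X = {0..<p}"
proof -
  have orb: "(a0 + int k * d) mod p \<in> X" for k :: nat
  proof (induction k)
    case 0 then show ?case using a0 X by auto
  next
    case (Suc k)
    have "((a0 + int k * d) mod p + d) mod p = ((a0 + int k * d) + d) mod p"
      by (rule mod_add_left_eq)
    also have "\<dots> = (a0 + int (Suc k) * d) mod p" by (simp add: algebra_simps)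
    finally have "((a0 + int k * d) mod p + d) mod p = (a0 + int (Suc k) * d) mod p" .
    then show ?case using inv[OF Suc] by simp
  qed
  have inj: "inj_on (\<lambda>k::nat. (a0 + int k * d) mod p) {0..<nat p}"
  proof (rule inj_onI)
    fix k l :: nat assume k: "k \<in> {0..<nat p}" and l: "l \<in> {0..<nat p}"
      and e: "(a0 + int k * d) mod p = (a0 + int l * d) mod p"
    then have "p dvd (a0 + int k * d) - (a0 + int l * d)" using mod_eq_dvd_iff by blast
    then have "p dvd (int k - int l) * d" by (simp add: algebra_simps)
    then have "p dvd (int k - int l)" using d pr by (simp add: prime_dvd_mult_iff)
    then have "int k = int l" using eq_of_dvd[of "int k" "int l"] k l by auto
    then show "k = l" by simp
  qed
  have "(\<lambda>k::nat. (a0 + int k * d) mod p) ` {0..<nat p} \<subseteq> X" using orb by auto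
  then have "card {0..<nat p} \<le> card X"
    using card_inj_on_le[OF inj] X by (meson finite_atLeastLessThan_int finite_subset)
  then have "card X \<ge> card {0..<p}" using p_gt1 by simp
  then show ?thesis using X card_subset_eq[of "{0..<p}" X] by (meson card_seteq finite_atLeastLessThan_int)
qed

lemma ssum_sub: "ssum p X Y \<subseteq> {0..<p}"
  using p_gt1 by (auto simp: ssum_def)

lemma ssum_tr: "ssum p X ((\<lambda>b. (b + e) mod p) ` Y) = (\<lambda>s. (s + e) mod p) ` ssum p X Y"
proof -
  have "ssum p X ((\<lambda>b. (b + e) mod p) ` Y) = (\<lambda>(a,b). (a + b + e) mod p) ` (X \<times> Y)"
    unfolding ssum_def by (force simp: mod_add_right_eq add.assoc image_iff)
  also have "\<dots> = (\<lambda>s. (s + e) mod p) ` ssum p X Y"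
    unfolding ssum_def by (force simp: mod_add_left_eq image_iff)
  finally show ?thesis .
qed

lemma cauchy_davenport_aux:
  "\<And>X. card Y = m \<Longrightarrow> X \<subseteq> {0..<p} \<Longrightarrow> Y \<subseteq> {0..<p} \<Longrightarrow> X \<noteq> {} \<Longrightarrow> Y \<noteq> {} \<Longrightarrow>
     card (ssum p X Y) \<ge> min (nat p) (card X + card Y - 1)"
proof (induction m arbitrary: Y rule: less_induct)
  case (less m X Y)
  have XP: "X \<subseteq> {0..<p}" and YP: "Y \<subseteq> {0..<p}" and Xn: "X \<noteq> {}" and Yn: "Y \<noteq> {}"
    and cY: "card Y = m" using less.prems by auto
  have fX: "finite X" and fY: "finite Y" using less.prems finite_subset by auto
  show ?case
  proof (cases "card Y \<le> 1")
    case True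
    then obtain y where Y: "Y = {y}" using less.prems fY
      by (metis One_nat_def card_0_eq card_eq_SucD le_Suc_eq le_zero_eq)
    have "ssum p X Y = (\<lambda>a. (a + y) mod p) ` X" unfolding ssum_def Y by auto
    then have "card (ssum p X Y) = card X"
      using card_image[OF inj_on_subset[OF tr_inj XP]] by simp
    then show ?thesis using Y by simp
  next
    case False
    then obtain y1 y2 where y: "y1 \<in> Y" "y2 \<in> Y" "y1 \<noteq> y2"
      by (metis One_nat_def card_le_Suc0_iff_eq fY not_less_eq_eq)
    show ?thesis
    proof (cases "X = {0..<p}")
      case True
      obtain y where "y \<in> Y" using y by blast
      have "(\<lambda>a. (a + y) mod p) ` X \<subseteq> ssum p X Y" unfolding ssum_def using \<open>y \<in> Y\<close> by force
      moreover have "card ((\<lambda>a. (a + y) mod p) ` X) = nat p"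
        using card_image[OF inj_on_subset[OF tr_inj XP]] True by simp
      ultimately have "card (ssum p X Y) \<ge> nat p"
        by (metis card_mono finite_atLeastLessThan_int finite_subset ssum_sub)
      then show ?thesis by simp
    next
      case Xne: False
      have "\<exists>e. ((\<lambda>b. (b + e) mod p) ` Y) \<inter> X \<noteq> {} \<and> \<not> ((\<lambda>b. (b + e) mod p) ` Y) \<subseteq> X"
      proof (rule ccontr)
        assume H: "\<not> ?thesis"
        obtain a0 where a0: "a0 \<in> X" using Xn by blast
        have "X = {0..<p}"
        proof (rule invariant_full[OF XP a0, of "y2 - y1"])
          show "\<not> p dvd y2 - y1" using eq_of_dvd[of y2 y1] y YP by fastforce
          fix a assume a: "a \<in> X"
          let ?e = "a - y1"
          have "(y1 + ?e) mod p = a" using a XP by auto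
          then have "a \<in> ((\<lambda>b. (b + ?e) mod p) ` Y) \<inter> X" using a y by force
          then have "((\<lambda>b. (b + ?e) mod p) ` Y) \<subseteq> X" using H by blast
          then have "(y2 + ?e) mod p \<in> X" using y by blast
          then show "(a + (y2 - y1)) mod p \<in> X" by (simp add: algebra_simps)
        qed
        then show False using Xne by simp
      qed
      then obtain e where e1: "((\<lambda>b. (b + e) mod p) ` Y) \<inter> X \<noteq> {}"
        and e2: "\<not> ((\<lambda>b. (b + e) mod p) ` Y) \<subseteq> X" by blast
      define Z where "Z = (\<lambda>b. (b + e) mod p) ` Y"
      have Zs: "Z \<subseteq> {0..<p}" unfolding Z_def using p_gt1 by auto
      have cZ: "card Z = card Y" unfolding Z_def
        using card_image[OF inj_on_subset[OF tr_inj YP]] by simp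
      have fZ: "finite Z" using Zs finite_subset by blast
      have c1: "card (X \<inter> Z) < card Y" using e2 cZ fZ
        by (metis Int_lower2 Z_def inf.absorb_iff2 inf_commute psubsetI psubset_card_mono)
      have c2: "card (X \<union> Z) + card (X \<inter> Z) = card X + card Y"
        using card_Un_Int[OF fX fZ] cZ by simp
      have IH: "card (ssum p (X \<union> Z) (X \<inter> Z)) \<ge> min (nat p) (card (X \<union> Z) + card (X \<inter> Z) - 1)"
        using less.IH[OF _ refl, of "X \<inter> Z" "X \<union> Z"] c1 less.prems Zs e1 unfolding Z_def
        by (auto simp: Z_def)
      have sub: "ssum p (X \<union> Z) (X \<inter> Z) \<subseteq> ssum p X Z"
      proof
        fix s assume "s \<in> ssum p (X \<union> Z) (X \<inter> Z)"
        then obtain a b where ab: "a \<in> X \<union> Z" "b \<in> X \<inter> Z" "s = (a + b) mod p"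
          unfolding ssum_def by auto
        show "s \<in> ssum p X Z"
        proof (cases "a \<in> X")
          case True then show ?thesis using ab unfolding ssum_def by force
        next
          case False
          then have "a \<in> Z" using ab by auto
          moreover have "s = (b + a) mod p" using ab by (simp add: add.commute)
          moreover have "(b, a) \<in> X \<times> Z" using ab \<open>a \<in> Z\<close> by auto
          ultimately show ?thesis unfolding ssum_def by (metis (no_types, lifting) case_prod_conv image_eqI)
        qed
      qed
      have "card (ssum p X Z) = card (ssum p X Y)"
        unfolding Z_def ssum_tr
        using card_image[OF inj_on_subset[OF tr_inj ssum_sub]] by simp
      moreover have "card (ssum p (X \<union> Z) (X \<inter> Z)) \<le> card (ssum p X Z)"
        using sub by (meson card_mono finite_atLeastLessThan_int finite_subset ssum_sub)
      ultimately show ?thesis using IH c2 less.prems(1) by linarith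
    qed
  qed
qed

lemma cauchy_davenport:
  "X \<subseteq> {0..<p} \<Longrightarrow> Y \<subseteq> {0..<p} \<Longrightarrow> X \<noteq> {} \<Longrightarrow> Y \<noteq> {} \<Longrightarrow>
     card (ssum p X Y) \<ge> min (nat p) (card X + card Y - 1)"
  using cauchy_davenport_aux by blast

end


lemma card_inter_ge:
  assumes "finite A" "X \<subseteq> A" "Y \<subseteq> A"
  shows "card X + card Y \<le> card (X \<inter> Y) + card A"
proof -
  have "finite X" "finite Y" using assms finite_subset by auto
  then have "card (X \<union> Y) + card (X \<inter> Y) = card X + card Y" by (rule card_Un_Int[symmetric])
  moreover have "card (X \<union> Y) \<le> card A" using assms by (simp add: card_mono)
  ultimately show ?thesis by linarith
qed

locale modA = modp +
  fixes A :: "int set" and n :: nat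
  assumes AP: "A \<subseteq> {0..<p}" and cA: "card A = n" and n2: "n \<ge> 2" and pn: "2 * int n < p"
begin

lemma fA: "finite A" using AP finite_subset by blast

definition r :: "int \<Rightarrow> nat" where "r d = card {u \<in> A. (u + d) mod p \<in> A}"

lemma r_le: "r d \<le> n"
  unfolding r_def using cA fA by (metis (no_types, lifting) card_mono mem_Collect_eq subsetI)

lemma r0: "r 0 = n"
proof -
  have "{u \<in> A. (u + 0) mod p \<in> A} = A" using AP by auto
  then show ?thesis unfolding r_def using cA by simp
qed

lemma reidx:
  assumes b: "b \<in> A"
  shows "(\<Sum>b'\<in>A. h ((b' - b) mod p)) = (\<Sum>d\<in>{d\<in>{0..<p}. (b + d) mod p \<in> A}. (h d :: real))"
proof -
  have bP: "b \<in> {0..<p}" using b AP by auto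
  have bij: "bij_betw (\<lambda>d. (b + d) mod p) {d\<in>{0..<p}. (b + d) mod p \<in> A} A"
  proof (rule bij_betw_imageI)
    show "inj_on (\<lambda>d. (b + d) mod p) {d \<in> {0..<p}. (b + d) mod p \<in> A}"
    proof -
      have "inj_on (\<lambda>d. (d + b) mod p) {d\<in>{0..<p}. (b + d) mod p \<in> A}"
        by (rule inj_on_subset[OF tr_inj]) auto
      then show ?thesis by (simp add: add.commute)
    qed
    show "(\<lambda>d. (b + d) mod p) ` {d \<in> {0..<p}. (b + d) mod p \<in> A} = A"
    proof
      show "(\<lambda>d. (b + d) mod p) ` {d \<in> {0..<p}. (b + d) mod p \<in> A} \<subseteq> A" by auto
      show "A \<subseteq> (\<lambda>d. (b + d) mod p) ` {d \<in> {0..<p}. (b + d) mod p \<in> A}"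
      proof
        fix b' assume b': "b' \<in> A"
        then have b'P: "b' \<in> {0..<p}" using AP by auto
        have e: "(b + (b' - b) mod p) mod p = b'"
          using b'P by (simp add: mod_add_right_eq)
        have "(b' - b) mod p \<in> {0..<p}" using p_gt1 by auto
        then show "b' \<in> (\<lambda>d. (b + d) mod p) ` {d \<in> {0..<p}. (b + d) mod p \<in> A}"
          using e b' by (metis (mono_tags, lifting) image_eqI mem_Collect_eq)
      qed
    qed
  qed
  have "(\<Sum>b'\<in>A. h ((b' - b) mod p)) = (\<Sum>d\<in>{d\<in>{0..<p}. (b + d) mod p \<in> A}. h (((b + d) mod p - b) mod p))"
    using sum.reindex_bij_betw[OF bij, of "\<lambda>b'. h ((b' - b) mod p)"] by simp
  also have "\<dots> = (\<Sum>d\<in>{d\<in>{0..<p}. (b + d) mod p \<in> A}. h d)"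
  proof (rule sum.cong[OF refl])
    fix d assume "d \<in> {d\<in>{0..<p}. (b + d) mod p \<in> A}"
    then have "d \<in> {0..<p}" by auto
    moreover have "((b + d) mod p - b) mod p = d mod p" by (simp add: mod_diff_left_eq)
    ultimately show "h (((b + d) mod p - b) mod p) = h d" by simp
  qed
  finally show ?thesis .
qed

lemma double:
  "(\<Sum>b\<in>A. \<Sum>b'\<in>A. h ((b' - b) mod p)) = (\<Sum>d\<in>{0..<p}. (h d :: real) * real (r d))"
proof -
  have "(\<Sum>b\<in>A. \<Sum>b'\<in>A. h ((b' - b) mod p)) =
        (\<Sum>b\<in>A. \<Sum>d\<in>{0..<p}. if (b + d) mod p \<in> A then h d else 0)"
  proof (rule sum.cong[OF refl])
    fix b assume b: "b \<in> A"
    show "(\<Sum>b'\<in>A. h ((b' - b) mod p)) = (\<Sum>d\<in>{0..<p}. if (b + d) mod p \<in> A then h d else 0)"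
      using reidx[OF b, of h] sum.inter_filter[of "{0..<p}" h "\<lambda>d. (b + d) mod p \<in> A"] by simp
  qed
  also have "\<dots> = (\<Sum>d\<in>{0..<p}. \<Sum>b\<in>A. if (b + d) mod p \<in> A then h d else 0)"
    by (rule sum.swap)
  also have "\<dots> = (\<Sum>d\<in>{0..<p}. h d * real (r d))"
  proof (rule sum.cong[OF refl])
    fix d
    have "(\<Sum>b\<in>A. if (b + d) mod p \<in> A then h d else 0) = (\<Sum>b\<in>{u\<in>A. (u + d) mod p \<in> A}. h d)"
      using fA sum.inter_filter[of A "\<lambda>_. h d" "\<lambda>u. (u + d) mod p \<in> A"] by simp
    also have "\<dots> = h d * real (r d)" unfolding r_def by simp
    finally show "(\<Sum>b\<in>A. if (b + d) mod p \<in> A then h d else 0) = h d * real (r d)" .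
  qed
  finally show ?thesis .
qed

lemma sum_r: "(\<Sum>d\<in>{0..<p}. real (r d)) = real n * real n"
  using double[of "\<lambda>_. 1"] cA by simp

lemma energy: "(\<Sum>b\<in>A. \<Sum>b'\<in>A. real (r ((b' - b) mod p))) = (\<Sum>d\<in>{0..<p}. real (r d) ^ 2)"
  using double[of "\<lambda>d. real (r d)"] by (simp add: power2_eq_square)

lemma r_add:
  assumes dP: "d \<in> {0..<p}"
  shows "r d + r e \<le> r ((d + e) mod p) + n"
proof -
  define U where "U = (\<lambda>d. {u \<in> A. (u + d) mod p \<in> A})"
  define f where "f = (\<lambda>u. (u + d) mod p)"
  have injf: "inj_on f A" unfolding f_def using inj_on_subset[OF tr_inj AP] .
  have fU: "f ` U d \<subseteq> A" "U e \<subseteq> A" unfolding U_def f_def by auto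
  have c1: "card (f ` U d) = r d" unfolding r_def U_def
    using card_image[OF inj_on_subset[OF injf]] by auto
  have "card (f ` U d) + card (U e) \<le> card (f ` U d \<inter> U e) + n"
    using card_inter_ge[OF fA fU] cA by simp
  moreover have "f ` U d \<inter> U e = f ` {u \<in> U d. f u \<in> U e}" by auto
  moreover have "card (f ` {u \<in> U d. f u \<in> U e}) = card {u \<in> U d. f u \<in> U e}"
    using card_image[OF inj_on_subset[OF injf]] unfolding U_def by auto
  moreover have "{u \<in> U d. f u \<in> U e} \<subseteq> U ((d + e) mod p)"
  proof
    fix u assume "u \<in> {u \<in> U d. f u \<in> U e}"
    then have u: "u \<in> A" "((u + d) mod p + e) mod p \<in> A" unfolding U_def f_def by auto
    have "((u + d) mod p + e) mod p = (u + (d + e) mod p) mod p"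
      by (simp add: mod_add_left_eq mod_add_right_eq add.assoc)
    then show "u \<in> U ((d + e) mod p)" using u unfolding U_def by auto
  qed
  then have "card {u \<in> U d. f u \<in> U e} \<le> r ((d + e) mod p)"
    unfolding r_def U_def using fA by (intro card_mono) auto
  ultimately have "card (f ` U d) + card (U e) \<le> r ((d + e) mod p) + n" by simp
  then show ?thesis using c1 unfolding r_def U_def by simp
qed

end


context modA begin

lemma npos: "real n > 0" using n2 by simp

lemma energy_bound: "(\<Sum>d\<in>{0..<p}. real (r d) ^ 2) \<le> real n ^ 3 - real n ^ 3 / 96"
proof -
  define S where "S = {d\<in>{0..<p}. 8 * r d \<ge> 7 * n}"
  define S' where "S' = {d\<in>{0..<p}. 4 * r d \<ge> 3 * n}"
  have SP: "S \<subseteq> {0..<p}" and S'P: "S' \<subseteq> {0..<p}" unfolding S_def S'_def by auto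
  have fS: "finite S" "finite S'" using SP S'P finite_subset by auto
  have S0: "0 \<in> S" unfolding S_def using r0 p_gt1 by auto
  have sub: "ssum p S S \<subseteq> S'"
  proof
    fix s assume "s \<in> ssum p S S"
    then obtain d e where de: "d \<in> S" "e \<in> S" "s = (d + e) mod p" unfolding ssum_def by auto
    have "r d + r e \<le> r ((d + e) mod p) + n" using r_add de SP by auto
    then have "4 * r s \<ge> 3 * n" using de unfolding S_def by auto
    moreover have "s \<in> {0..<p}" using de p_gt1 by auto
    ultimately show "s \<in> S'" unfolding S'_def by auto
  qed
  have "real (card S') * (3 * real n / 4) = (\<Sum>d\<in>S'. 3 * real n / 4)" by simp
  also have "\<dots> \<le> (\<Sum>d\<in>S'. real (r d))"
    by (rule sum_mono) (auto simp: S'_def)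
  also have "\<dots> \<le> (\<Sum>d\<in>{0..<p}. real (r d))"
    by (rule sum_mono2) (use S'P in auto)
  also have "\<dots> = real n * real n" by (rule sum_r)
  finally have "real (card S') * (3 * real n / 4) \<le> real n * real n" .
  then have "real n * (real (card S') * 3) \<le> real n * (4 * real n)" by (simp add: algebra_simps)
  then have cS': "real (card S') * 3 \<le> 4 * real n" using npos by (simp add: mult_le_cancel_left_pos)
  have "card (ssum p S S) \<le> card S'" using sub fS by (simp add: card_mono)
  moreover have "card (ssum p S S) \<ge> min (nat p) (card S + card S - 1)"
    using cauchy_davenport[OF SP SP] S0 by blast
  moreover have "real (card S') < real (nat p)" using cS' pn npos by linarith
  ultimately have "card S + card S - 1 \<le> card S'" by linarith
  moreover have "card S \<ge> 1" using S0 fS by (metis One_nat_def Suc_leI card_gt_0_iff empty_iff)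
  ultimately have cS: "2 * real (card S) - 1 \<le> real (card S')" by linarith
  define a where "a = (\<Sum>d\<in>S. real (r d))"
  define b where "b = (\<Sum>d\<in>{0..<p} - S. real (r d))"
  have ab: "a + b = real n * real n"
    unfolding a_def b_def using sum.subset_diff[OF SP, of "\<lambda>d. real (r d)"] sum_r by simp
  have a_le: "a \<le> real n * real (card S)"
  proof -
    have "a \<le> (\<Sum>d\<in>S. real n)" unfolding a_def by (rule sum_mono) (use r_le in auto)
    then show ?thesis by (simp add: mult.commute)
  qed
  have E1: "(\<Sum>d\<in>S. real (r d) ^ 2) \<le> real n * a"
  proof -
    have "(\<Sum>d\<in>S. real (r d) ^ 2) \<le> (\<Sum>d\<in>S. real n * real (r d))"
      by (rule sum_mono) (use r_le in \<open>auto simp: power2_eq_square intro: mult_right_mono\<close>)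
    then show ?thesis unfolding a_def by (simp add: sum_distrib_left)
  qed
  have E2: "(\<Sum>d\<in>{0..<p} - S. real (r d) ^ 2) \<le> (7 * real n / 8) * b"
  proof -
    have "(\<Sum>d\<in>{0..<p} - S. real (r d) ^ 2) \<le> (\<Sum>d\<in>{0..<p} - S. (7 * real n / 8) * real (r d))"
    proof (rule sum_mono)
      fix d assume "d \<in> {0..<p} - S"
      then have "8 * r d < 7 * n" unfolding S_def by auto
      then have "real (r d) \<le> 7 * real n / 8" by linarith
      then show "real (r d) ^ 2 \<le> (7 * real n / 8) * real (r d)"
        using mult_right_mono[of "real (r d)" "7 * real n / 8" "real (r d)"] by (simp add: power2_eq_square)
    qed
    then show ?thesis unfolding b_def by (simp add: sum_distrib_left)
  qed
  have "(\<Sum>d\<in>{0..<p}. real (r d) ^ 2) = (\<Sum>d\<in>S. real (r d) ^ 2) + (\<Sum>d\<in>{0..<p} - S. real (r d) ^ 2)"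
    using sum.subset_diff[OF SP, of "\<lambda>d. real (r d) ^ 2"] by simp
  also have "\<dots> \<le> real n * a + (7 * real n / 8) * b" using E1 E2 by linarith
  finally have E: "(\<Sum>d\<in>{0..<p}. real (r d) ^ 2) \<le> real n * a + (7 * real n / 8) * b" .
  have cSn: "real (card S) \<le> 2 * real n / 3 + 1 / 2" using cS cS' by linarith
  have "a \<le> real n * (2 * real n / 3 + 1 / 2)"
    using a_le mult_left_mono[OF cSn, of "real n"] by simp
  then have "b \<ge> real n * real n / 3 - real n / 2" using ab by (simp add: algebra_simps)
  moreover have "real n * real n / 3 - real n / 2 \<ge> real n * real n / 12"
  proof -
    have "real n * real n \<ge> 2 * real n" using mult_right_mono[of 2 "real n" "real n"] n2 by simp
    then show ?thesis by linarith
  qed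
  ultimately have bb: "b \<ge> real n * real n / 12" by linarith
  have "real n * a + (7 * real n / 8) * b = real n * (a + b) - real n * b / 8" by (simp add: algebra_simps)
  also have "\<dots> \<le> real n * (real n * real n) - real n * (real n * real n / 12) / 8"
    using ab bb npos by (simp add: mult_left_mono)
  also have "\<dots> = real n ^ 3 - real n ^ 3 / 96" by (simp add: power3_eq_cube)
  finally show ?thesis using E by linarith
qed

end


context modA begin

lemma neg_inj: "inj_on (\<lambda>s. (x - s) mod p) {0..<p}"
proof (rule inj_onI)
  fix a b assume a: "a \<in> {0..<p}" and b: "b \<in> {0..<p}" and e: "(x - a) mod p = (x - b) mod p"
  then have "p dvd (x - a) - (x - b)" using mod_eq_dvd_iff by blast
  then have "p dvd b - a" by simp
  then show "a = b" using eq_of_dvd[OF b a] by simp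
qed

lemma sub_back: "(((a + b + c) mod p) - b - c) mod p = a mod p"
proof -
  have "((a + b + c) mod p - b - c) mod p = ((a + b + c) mod p - (b + c)) mod p" by (simp add: diff_diff_eq)
  also have "\<dots> = ((a + b + c) - (b + c)) mod p" by (rule mod_diff_left_eq)
  finally show ?thesis by simp
qed

definition G :: "int \<Rightarrow> int \<Rightarrow> int set" where "G x b = {c \<in> A. (x - b - c) mod p \<in> A}"

lemma g_pair:
  assumes b: "b \<in> A" and b': "b' \<in> A"
  shows "card (G x b) + card (G x b') \<le> n + r ((b' - b) mod p)"
proof -
  define W where "W = {s \<in> {0..<p}. (x - s) mod p \<in> A}"
  have fW: "finite W" unfolding W_def by (rule finite_subset[of _ "{0..<p}"]) auto
  have W1: "W \<subseteq> {0..<p}" "(\<lambda>s. (x - s) mod p) ` W \<subseteq> A" unfolding W_def by auto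
  have cW: "card W \<le> n"
    using card_inj_on_le[OF inj_on_subset[OF neg_inj[of x] W1(1)] W1(2) fA] cA by simp
  define I where "I = (\<lambda>b. (\<lambda>c. (b + c) mod p) ` G x b)"
  have IW: "I b0 \<subseteq> W" for b0
  proof
    fix s assume "s \<in> I b0"
    then obtain c where c: "c \<in> G x b0" "s = (b0 + c) mod p" unfolding I_def by auto
    have "(x - s) mod p = (x - b0 - c) mod p" using c by (simp add: mod_simps algebra_simps)
    then show "s \<in> W" using c p_gt1 unfolding W_def G_def by auto
  qed
  have cI: "card (I b0) = card (G x b0)" for b0
  proof -
    have "inj_on (\<lambda>c. (c + b0) mod p) (G x b0)"
      by (rule inj_on_subset[OF tr_inj]) (use AP in \<open>auto simp: G_def\<close>)
    then show ?thesis unfolding I_def by (simp add: card_image add.commute)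
  qed
  have "card (I b) + card (I b') \<le> card (I b \<inter> I b') + card W"
    using card_inter_ge[OF fW IW IW] .
  moreover have "card (I b \<inter> I b') \<le> r ((b' - b) mod p)"
  proof -
    define k where "k = (\<lambda>s. (s + - b') mod p)"
    have ik: "inj_on k (I b \<inter> I b')" unfolding k_def
      by (rule inj_on_subset[OF tr_inj]) (use IW[of b] W1(1) in blast)
    have "k ` (I b \<inter> I b') \<subseteq> {u \<in> A. (u + (b' - b) mod p) mod p \<in> A}"
    proof
      fix u assume "u \<in> k ` (I b \<inter> I b')"
      then obtain s where s: "s \<in> I b" "s \<in> I b'" "u = k s" by auto
      obtain c where c: "c \<in> G x b" "s = (b + c) mod p" using s unfolding I_def by auto
      obtain c' where c': "c' \<in> G x b'" "s = (b' + c') mod p" using s unfolding I_def by auto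
      have cA': "c \<in> A" "c' \<in> A" using c c' unfolding G_def by auto
      have "u = c' mod p" using s c' unfolding k_def by (simp add: mod_simps)
      then have u: "u = c'" using cA' AP by auto
      have "(u + (b' - b) mod p) mod p = (u + (b' - b)) mod p" by (rule mod_add_right_eq)
      also have "\<dots> = ((s - b') mod p + (b' - b)) mod p" using s unfolding k_def by simp
      also have "\<dots> = ((s - b') + (b' - b)) mod p" by (rule mod_add_left_eq)
      also have "\<dots> = (s - b) mod p" by simp
      also have "\<dots> = ((b + c) mod p - b) mod p" using c by simp
      also have "\<dots> = (b + c - b) mod p" by (rule mod_diff_left_eq)
      also have "\<dots> = c mod p" by simp
      finally have "(u + (b' - b) mod p) mod p = c mod p" .
      then have "(u + (b' - b) mod p) mod p = c" using cA' AP by auto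
      then show "u \<in> {u \<in> A. (u + (b' - b) mod p) mod p \<in> A}" using u cA' by auto
    qed
    then have "card (k ` (I b \<inter> I b')) \<le> r ((b' - b) mod p)"
      unfolding r_def using fA by (intro card_mono) auto
    then show ?thesis using card_image[OF ik] by simp
  qed
  ultimately show ?thesis using cI[of b] cI[of b'] cW by linarith
qed

lemma T_eq:
  assumes x: "x \<in> {0..<p}"
  shows "card {((a,b),c) \<in> (A \<times> A) \<times> A. (a + b + c) mod p = x} = (\<Sum>b\<in>A. card (G x b))"
proof -
  have "bij_betw (\<lambda>((a,b),c). (b,c)) {((a,b),c) \<in> (A \<times> A) \<times> A. (a + b + c) mod p = x} (Sigma A (G x))"
  proof (rule bij_betw_imageI)
    show "inj_on (\<lambda>((a,b),c). (b,c)) {((a,b),c) \<in> (A \<times> A) \<times> A. (a + b + c) mod p = x}"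
    proof (rule inj_onI)
      fix u v assume u: "u \<in> {((a,b),c) \<in> (A \<times> A) \<times> A. (a + b + c) mod p = x}"
        and v: "v \<in> {((a,b),c) \<in> (A \<times> A) \<times> A. (a + b + c) mod p = x}"
        and e: "(\<lambda>((a,b),c). (b,c)) u = (\<lambda>((a,b),c). (b,c)) v"
      obtain a b c where uu: "u = ((a,b),c)" by (metis prod.exhaust)
      obtain a' b' c' where vv: "v = ((a',b'),c')" by (metis prod.exhaust)
      have bc: "b' = b" "c' = c" using e uu vv by auto
      have a: "a \<in> A" "a' \<in> A" and e2: "(a + b + c) mod p = x" "(a' + b + c) mod p = x"
        using u v uu vv bc by auto
      have "a mod p = (x - b - c) mod p" using e2(1) sub_back by auto
      moreover have "a' mod p = (x - b - c) mod p" using e2(2) sub_back by auto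
      moreover have "a mod p = a" "a' mod p = a'" using a AP by auto
      ultimately show "u = v" using uu vv bc by simp
    qed
    show "(\<lambda>((a,b),c). (b,c)) ` {((a,b),c) \<in> (A \<times> A) \<times> A. (a + b + c) mod p = x} = Sigma A (G x)"
    proof
      show "(\<lambda>((a,b),c). (b,c)) ` {((a,b),c) \<in> (A \<times> A) \<times> A. (a + b + c) mod p = x} \<subseteq> Sigma A (G x)"
      proof
        fix w assume "w \<in> (\<lambda>((a,b),c). (b,c)) ` {((a,b),c) \<in> (A \<times> A) \<times> A. (a + b + c) mod p = x}"
        then obtain a b c where w: "w = (b,c)" "a \<in> A" "b \<in> A" "c \<in> A" "(a + b + c) mod p = x" by auto
        moreover have "(x - b - c) mod p = a mod p" using w(5) sub_back by auto
        moreover have "a mod p = a" using w(2) AP by auto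
        ultimately show "w \<in> Sigma A (G x)" unfolding G_def by auto
      qed
      show "Sigma A (G x) \<subseteq> (\<lambda>((a,b),c). (b,c)) ` {((a,b),c) \<in> (A \<times> A) \<times> A. (a + b + c) mod p = x}"
      proof
        fix w assume "w \<in> Sigma A (G x)"
        then obtain b c where w: "w = (b,c)" and b: "b \<in> A" and c: "c \<in> G x b" by auto
        let ?a = "(x - b - c) mod p"
        have "?a \<in> A" "c \<in> A" using c unfolding G_def by auto
        moreover have "(?a + b + c) mod p = x"
        proof -
          have "(?a + b + c) mod p = (?a + (b + c)) mod p" by (simp add: add.assoc)
          also have "\<dots> = (x - b - c + (b + c)) mod p" by (rule mod_add_left_eq)
          also have "\<dots> = x" using x by simp
          finally show ?thesis .
        qed
        ultimately show "w \<in> (\<lambda>((a,b),c). (b,c)) ` {((a,b),c) \<in> (A \<times> A) \<times> A. (a + b + c) mod p = x}"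
          using b w by (auto intro!: image_eqI[where x="((?a, b), c)"])
      qed
    qed
  qed
  then have "card {((a,b),c) \<in> (A \<times> A) \<times> A. (a + b + c) mod p = x} = card (Sigma A (G x))"
    by (rule bij_betw_same_card)
  also have "\<dots> = (\<Sum>b\<in>A. card (G x b))"
    using fA by (intro card_SigmaI) (auto simp: G_def)
  finally show ?thesis .
qed

lemma T_bound:
  assumes x: "x \<in> {0..<p}"
  shows "real (card {((a,b),c) \<in> (A \<times> A) \<times> A. (a + b + c) mod p = x}) \<le> 191 / 192 * real n ^ 2"
proof -
  define T where "T = (\<Sum>b\<in>A. real (card (G x b)))"
  have "(\<Sum>b\<in>A. \<Sum>b'\<in>A. real (card (G x b)) + real (card (G x b'))) \<le>
        (\<Sum>b\<in>A. \<Sum>b'\<in>A. real n + real (r ((b' - b) mod p)))"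
    using g_pair by (intro sum_mono) (metis of_nat_add of_nat_le_iff)
  moreover have "(\<Sum>b\<in>A. \<Sum>b'\<in>A. real (card (G x b)) + real (card (G x b'))) = 2 * real n * T"
    unfolding T_def using cA by (simp add: sum.distrib sum_distrib_left[symmetric] algebra_simps)
  moreover have "(\<Sum>b\<in>A. \<Sum>b'\<in>A. real n + real (r ((b' - b) mod p))) =
      real n ^ 3 + (\<Sum>d\<in>{0..<p}. real (r d) ^ 2)"
    using energy cA by (simp add: sum.distrib power3_eq_cube)
  ultimately have "2 * real n * T \<le> real n ^ 3 + (real n ^ 3 - real n ^ 3 / 96)"
    using energy_bound by linarith
  then have "real n * (2 * T) \<le> real n * (191 / 96 * real n ^ 2)" by (simp add: power3_eq_cube power2_eq_square algebra_simps)
  then have "2 * T \<le> 191 / 96 * real n ^ 2" using npos by (simp add: mult_le_cancel_left_pos)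
  then show ?thesis using T_eq[OF x] unfolding T_def by simp
qed

end


lemma pair_pmf_of_set:
  assumes "finite X" "X \<noteq> {}" "finite Y" "Y \<noteq> {}"
  shows "pair_pmf (pmf_of_set X) (pmf_of_set Y) = pmf_of_set (X \<times> Y)"
proof (rule pmf_eqI)
  fix i :: "'a \<times> 'b"
  obtain a b where i: "i = (a, b)" by (cases i)
  show "pmf (pair_pmf (pmf_of_set X) (pmf_of_set Y)) i = pmf (pmf_of_set (X \<times> Y)) i"
    unfolding i using assms by (simp add: pmf_pair card_cartesian_product split: split_indicator)
qed

theorem proposition3p2:
  shows "\<exists>C2::real. C2 < 1 \<and>
    (\<forall>(p::nat) (n::nat) (A::nat set).
       prime p \<longrightarrow> n \<ge> 2 \<longrightarrow> p > 2 * n \<longrightarrow>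
       A \<subseteq> {..<p} \<longrightarrow> card A = n \<longrightarrow>
       (\<forall>x<p. pmf (sum3_dist p A) x \<le> C2 / real n))"
proof (intro exI[of _ "191/192"] conjI allI impI)
  fix p n :: nat and A :: "nat set" and x :: nat
  assume pr: "prime p" and n2: "n \<ge> 2" and pn: "p > 2 * n" and Ap: "A \<subseteq> {..<p}"
    and cA: "card A = n" and x: "x < p"
  have fA: "finite A" using Ap finite_subset by blast
  have Ane: "A \<noteq> {}" using cA n2 by auto
  define f where "f = (\<lambda>((a::nat, b::nat), c::nat). (a + b + c) mod p)"
  define S where "S = {((a,b),c) \<in> (A \<times> A) \<times> A. (a + b + c) mod p = x}"
  have "sum3_dist p A = map_pmf f (pmf_of_set ((A \<times> A) \<times> A))"
    unfolding sum3_dist_def f_def using fA Ane by (simp add: pair_pmf_of_set)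
  then have "pmf (sum3_dist p A) x = real (card ((A \<times> A) \<times> A \<inter> f -` {x})) / real (card ((A \<times> A) \<times> A))"
    using fA Ane by (simp add: pmf_map measure_pmf_of_set)
  also have "(A \<times> A) \<times> A \<inter> f -` {x} = S" unfolding S_def f_def by auto
  also have "card ((A \<times> A) \<times> A) = n ^ 3" using cA by (simp add: card_cartesian_product power3_eq_cube)
  finally have pm: "pmf (sum3_dist p A) x = real (card S) / real n ^ 3" by simp
  define A' where "A' = int ` A"
  interpret modA "int p" A' n
  proof
    show "prime (int p)" using pr by (simp add: prime_nat_int_transfer)
    show "A' \<subseteq> {0..<int p}" using Ap unfolding A'_def by auto
    show "card A' = n" unfolding A'_def using cA by (simp add: card_image)
    show "2 \<le> n" by (rule n2)
    show "2 * int n < int p" using pn by simp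
  qed
  define h where "h = (\<lambda>((a::nat, b::nat), c::nat). ((int a, int b), int c))"
  have "h ` S = {((a,b),c) \<in> (A' \<times> A') \<times> A'. (a + b + c) mod int p = int x}"
  proof
    show "h ` S \<subseteq> {((a,b),c) \<in> (A' \<times> A') \<times> A'. (a + b + c) mod int p = int x}"
      unfolding S_def h_def A'_def by (auto simp flip: of_nat_mod of_nat_add)
    show "{((a,b),c) \<in> (A' \<times> A') \<times> A'. (a + b + c) mod int p = int x} \<subseteq> h ` S"
    proof
      fix w assume "w \<in> {((a,b),c) \<in> (A' \<times> A') \<times> A'. (a + b + c) mod int p = int x}"
      then obtain a b c where w: "w = ((int a, int b), int c)" "a \<in> A" "b \<in> A" "c \<in> A"
        "(int a + int b + int c) mod int p = int x" unfolding A'_def by auto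
      then have "int ((a + b + c) mod p) = int x" by (simp add: of_nat_mod)
      then have "(a + b + c) mod p = x" by simp
      then have "((a,b),c) \<in> S" using w unfolding S_def by auto
      then show "w \<in> h ` S" using w unfolding h_def by force
    qed
  qed
  moreover have "inj_on h S" unfolding h_def by (auto simp: inj_on_def)
  ultimately have "card S = card {((a,b),c) \<in> (A' \<times> A') \<times> A'. (a + b + c) mod int p = int x}"
    by (metis card_image)
  then have "real (card S) \<le> 191 / 192 * real n ^ 2" using T_bound[of "int x"] x by simp
  then have "real (card S) / real n ^ 3 \<le> (191 / 192 * real n ^ 2) / real n ^ 3"
    by (rule divide_right_mono) simp
  also have "\<dots> = 191 / 192 / real n" using npos by (simp add: power2_eq_square power3_eq_cube)
  finally show "pmf (sum3_dist p A) x \<le> 191 / 192 / real n" using pm by simp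
qed simp


end
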